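(* Let $\mathcal{F}$ be a representable flag matroid on $[n]$. Then the associated polymatroid $\mathcal{M}(\mathcal{F})$ is a representable polymatroid.
   Context: For a $k$-dimensional subspace $V\subseteq\mathbb{C}^n$, choose a $k\times n$ matrix whose rows span $V$; the matroid $M_V$ on $[n]$ has as bases the $k$-subsets of columns with nonzero maximal minor. A flag matroid of rank $\mathbf{k}=(k_1\le\dots\le k_s)$ on $[n]$ is a collection of set-theoretic flags $F^1\subseteq\dots\subseteq F^s$ with $|F^i|=k_i$; it is representable if there is a flag of subspaces $V_1\subseteq\dots\subseteq V_s\subsetneq\mathbb{C}^n$, $\dim V_i=k_i$, such that $\mathcal{F}$ consists exactly of the flags $B_1\subseteq\dots\subseteq B_s$ with each $B_i$ a basis of $M_{V_i}$. The base polytope of $\mathcal{F}$ is $P(\mathcal{F})=\mathrm{conv}\{\sum_i\mathbf{e}_{F^i}:F\in\mathcal{F}\}$, with $\mathbf{e}_B$ the indicator vector of $B$. A polymatroid on $E$ is given by a rank function $r:\mathcal{P}(E)\to\mathbb{Z}_{\ge0}$, $r(\emptyset)=0$, monotone and submodular; its base polytope is $\{x\in\mathbb{R}^E_{\ge0}:x\cdot\mathbf{e}_U\le r(U)\ \forall U,\ x\cdot\mathbf{e}_E=r(E)\}$, and a polymatroid is determined by its base polytope. The polytope $P(\mathcal{F})$ is the base polytope of a polymatroid; this polymatroid is denoted $\mathcal{M}(\mathcal{F})$. A polymatroid on $E$ is representable if there is a vector space $V$ and a map $\phi$ from $E$ to the set of subspaces of $V$ such that $r(A)=\dim\sum_{a\in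 A}\phi(a)$ for all $A\subseteq E$. *)

theory Defs
  imports "HOL-Analysis.Analysis" "HOL-Library.Function_Algebras"
begin

text \<open>The ground set [n] is the finite type 'n (i.e. UNIV :: 'n set); C^n is complex ^ 'n.\<close>

definition det_nat :: "nat \<Rightarrow> (nat \<Rightarrow> nat \<Rightarrow> complex) \<Rightarrow> complex" where
  "det_nat k M = (\<Sum>p\<in>{p. p permutes {..<k}}. of_int (sign p) * (\<Prod>i<k. M i (p i)))"

text \<open>B is a basis of the matroid M_V: for a k x n matrix whose rows a 0, ..., a (k-1) span V
  (k = dim V), the maximal minor on the columns B (listed via a bijection e) is nonzero.\<close>
definition MV_basis :: "(complex ^ 'n) set \<Rightarrow> 'n set \<Rightarrow> bool" where
  "MV_basis V B \<longleftrightarrow>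
     (let k = vec.dim V in
      \<exists>(a :: nat \<Rightarrow> complex ^ 'n) (e :: nat \<Rightarrow> 'n).
         vec.span (a ` {..<k}) = V \<and> bij_betw e {..<k} B \<and>
         det_nat k (\<lambda>i j. a i $ e j) \<noteq> 0)"

text \<open>A flag matroid of rank ks = (k_1 \<le> ... \<le> k_s) is a set of set-theoretic flags, each
  given as a list of subsets of [n] of length s.\<close>
definition representable_flag_matroid :: "nat list \<Rightarrow> ('n::finite set list) set \<Rightarrow> bool" where
  "representable_flag_matroid ks FF \<longleftrightarrow>
     sorted ks \<and>
     (\<exists>Vs :: (complex ^ 'n) set list.
        length Vs = length ks \<and>
        (\<forall>i<length Vs. vec.subspace (Vs ! i) \<and> vec.dim (Vs ! i) = ks ! i \<and> Vs ! i \<noteq> UNIV) \<and>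
        (\<forall>i. Suc i < length Vs \<longrightarrow> Vs ! i \<subseteq> Vs ! Suc i) \<and>
        FF = {Bs. length Bs = length ks \<and>
                  (\<forall>i. Suc i < length Bs \<longrightarrow> Bs ! i \<subseteq> Bs ! Suc i) \<and>
                  (\<forall>i<length Bs. MV_basis (Vs ! i) (Bs ! i))})"

definition indic_vec :: "'n::finite set \<Rightarrow> real ^ 'n" where
  "indic_vec B = (\<chi> i. if i \<in> B then 1 else 0)"

definition flag_base_polytope :: "('n::finite set list) set \<Rightarrow> (real ^ 'n) set" where
  "flag_base_polytope FF = convex hull {sum_list (map indic_vec F) | F. F \<in> FF}"

definition polymatroid :: "('n::finite set \<Rightarrow> nat) \<Rightarrow> bool" where
  "polymatroid r \<longleftrightarrow> r {} = 0 \<and> (\<forall>A B. A \<subseteq> B \<longrightarrow> r A \<le> r B) \<and>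
     (\<forall>A B. r (A \<union> B) + r (A \<inter> B) \<le> r A + r B)"

definition polymatroid_base_polytope :: "('n::finite set \<Rightarrow> nat) \<Rightarrow> (real ^ 'n) set" where
  "polymatroid_base_polytope r =
     {x. (\<forall>i. x $ i \<ge> 0) \<and> (\<forall>U. x \<bullet> indic_vec U \<le> real (r U)) \<and>
         x \<bullet> indic_vec UNIV = real (r UNIV)}"

text \<open>Representing vector space: complex vector space nat \<Rightarrow> complex (pointwise operations);
  every finite-dimensional complex vector space embeds into it.\<close>
definition fscale :: "complex \<Rightarrow> (nat \<Rightarrow> complex) \<Rightarrow> (nat \<Rightarrow> complex)" where
  "fscale c f = (\<lambda>i. c * f i)"

interpretation fvec: vector_space fscale
  by unfold_locales (auto simp: fscale_def fun_eq_iff algebra_simps)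

definition representable_polymatroid :: "('n::finite set \<Rightarrow> nat) \<Rightarrow> bool" where
  "representable_polymatroid r \<longleftrightarrow>
     (\<exists>\<phi> :: 'n \<Rightarrow> (nat \<Rightarrow> complex) set.
        (\<forall>a. fvec.subspace (\<phi> a) \<and> (\<exists>S. finite S \<and> \<phi> a = fvec.span S)) \<and>
        (\<forall>A. r A = fvec.dim (fvec.span (\<Union>a\<in>A. \<phi> a))))"

end

theory Submission
  imports Defs "Jordan_Normal_Form.Determinant"
begin

lemma det_nat_eq: "det_nat k M = Determinant.det (Matrix.mat k k (\<lambda>(i,j). M i j))"
  unfolding det_nat_def Determinant.det_def
  by (simp add: lessThan_atLeast0)

lemma det_nat_nonzero_iff:
  "det_nat k M \<noteq> 0 \<longleftrightarrow> (\<forall>d. (\<forall>j<k. (\<Sum>i<k. M i j * d i) = 0) \<longrightarrow> (\<forall>i<k. d i = 0))"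
proof -
  define A where "A = Matrix.mat k k (\<lambda>(i,j). M i j)"
  have A: "A \<in> carrier_mat k k" unfolding A_def by simp
  have AT: "transpose_mat A \<in> carrier_mat k k" using A by simp
  have eq: "det_nat k M = Determinant.det (transpose_mat A)"
    using det_nat_eq[of k M] det_transpose[OF A] unfolding A_def by simp
  have idx: "vec_index (mult_mat_vec (transpose_mat A) v) j = (\<Sum>i<k. M i j * vec_index v i)"
    if "j < k" "v \<in> carrier_vec k" for v j
  proof -
    have dv: "dim_vec v = k" using that(2) by (rule carrier_vecD)
    have "vec_index (mult_mat_vec (transpose_mat A) v) j = row (transpose_mat A) j \<bullet> v"
      using that(1) A by simp
    also have "\<dots> = (\<Sum>i\<in>{0..<k}. vec_index (row (transpose_mat A) j) i * vec_index v i)"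
      unfolding scalar_prod_def dv ..
    also have "\<dots> = (\<Sum>i\<in>{0..<k}. M i j * vec_index v i)"
      by (rule sum.cong) (use that(1) A in \<open>auto simp: A_def\<close>)
    finally show ?thesis by (simp add: atLeast0LessThan)
  qed
  show ?thesis
  proof
    assume d0: "det_nat k M \<noteq> 0"
    show "\<forall>d. (\<forall>j<k. (\<Sum>i<k. M i j * d i) = 0) \<longrightarrow> (\<forall>i<k. d i = 0)"
    proof (intro allI impI)
      fix d i assume h: "\<forall>j<k. (\<Sum>i<k. M i j * d i) = 0" and i: "i < k"
      define v where "v = Matrix.vec k d"
      have vc: "v \<in> carrier_vec k" unfolding v_def by simp
      have "mult_mat_vec (transpose_mat A) v = zero_vec k"
        apply (rule eq_vecI)
        using idx[OF _ vc] h AT unfolding v_def by (auto simp: lessThan_atLeast0)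
      then have "v = zero_vec k" using d0 det_0_iff_vec_prod_zero_field[OF AT] eq vc by auto
      then show "d i = 0" using i unfolding v_def
        by (metis index_vec index_zero_vec(1))
    qed
  next
    assume h: "\<forall>d. (\<forall>j<k. (\<Sum>i<k. M i j * d i) = 0) \<longrightarrow> (\<forall>i<k. d i = 0)"
    show "det_nat k M \<noteq> 0"
    proof
      assume "det_nat k M = 0"
      then obtain v where v: "v \<in> carrier_vec k" "v \<noteq> zero_vec k"
        "mult_mat_vec (transpose_mat A) v = zero_vec k"
        using det_0_iff_vec_prod_zero_field[OF AT] eq by auto
      have "\<forall>j<k. (\<Sum>i<k. M i j * vec_index v i) = 0"
        using idx[OF _ v(1)] v(3) by (metis index_zero_vec(1))
      then have "\<forall>i<k. vec_index v i = 0" using h by blast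
      then have "v = zero_vec k" using v(1) by (intro eq_vecI) auto
      then show False using v(2) by simp
    qed
  qed
qed

no_notation Matrix.vec_index (infixl "$" 100)
no_notation Matrix.scalar_prod (infix "\<bullet>" 70)

definition Zs :: "'n::finite set \<Rightarrow> (complex^'n) set" where
  "Zs A = {v. \<forall>a\<in>A. v$a = 0}"

lemma subspace_Zs: "vec.subspace (Zs A)"
  unfolding vec.subspace_def Zs_def by auto

lemma Zs_insert: "Zs (insert a A) = Zs A \<inter> Zs {a}" by (auto simp: Zs_def)
lemma Zs_empty[simp]: "Zs {} = UNIV" by (auto simp: Zs_def)
lemma Zs_UNIV: "Zs UNIV = {0}" by (auto simp: Zs_def Finite_Cartesian_Product.vec_eq_iff)

lemma span_image_sum:
  fixes a :: "'i \<Rightarrow> complex^'n"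
  assumes "finite I" "v \<in> vec.span (a ` I)"
  shows "\<exists>c. v = (\<Sum>i\<in>I. c i *s a i)"
proof -
  let ?S = "{v. \<exists>c. v = (\<Sum>i\<in>I. c i *s a i)}"
  have "vec.subspace ?S"
    unfolding vec.subspace_def
  proof (intro conjI ballI allI)
    show "0 \<in> ?S" by (rule CollectI, rule exI[of _ "\<lambda>_. 0"]) simp
  next
    fix x y assume "x \<in> ?S" "y \<in> ?S"
    then obtain c d where "x = (\<Sum>i\<in>I. c i *s a i)" "y = (\<Sum>i\<in>I. d i *s a i)" by auto
    then have "x + y = (\<Sum>i\<in>I. (c i + d i) *s a i)"
      by (simp add: sum.distrib vector_sadd_rdistrib)
    then show "x + y \<in> ?S" by (intro CollectI exI[where x="\<lambda>i. c i + d i"])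
  next
    fix r x assume "x \<in> ?S"
    then obtain c where "x = (\<Sum>i\<in>I. c i *s a i)" by auto
    then have "r *s x = (\<Sum>i\<in>I. (r * c i) *s a i)" by (simp add: vec.scale_sum_right)
    then show "r *s x \<in> ?S" by (intro CollectI exI[where x="\<lambda>i. r * c i"])
  qed
  moreover have "a ` I \<subseteq> ?S"
  proof
    fix x assume "x \<in> a ` I" then obtain j where j: "j \<in> I" "x = a j" by auto
    have "(\<Sum>i\<in>I. (if i = j then 1 else 0) *s a i) = (\<Sum>i\<in>I. if i = j then a i else 0)"
      by (rule sum.cong) auto
    also have "\<dots> = a j" using j assms(1) by (simp add: sum.delta')
    finally show "x \<in> ?S" using j by (intro CollectI exI[where x="\<lambda>i. if i = j then 1 else 0"]) simp
  qed
  ultimately show ?thesis using vec.span_minimal assms(2) by blast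
qed

lemma sum_scale_component: "(\<Sum>i\<in>I. c i *s (a i :: complex^'n)) $ t = (\<Sum>i\<in>I. c i * a i $ t)"
  by (simp add: sum_component)

lemma MV_basis_imp:
  assumes "MV_basis V B"
  shows "card B = vec.dim V" "\<forall>v\<in>V. (\<forall>b\<in>B. v$b = 0) \<longrightarrow> v = 0"
proof -
  define k where "k = vec.dim V"
  obtain a e where sp: "vec.span (a ` {..<k}) = V" and bij: "bij_betw e {..<k} B"
    and det: "det_nat k (\<lambda>i j. a i $ e j) \<noteq> 0"
    using assms unfolding MV_basis_def Let_def k_def by blast
  show "card B = vec.dim V" using bij_betw_same_card[OF bij] k_def by simp
  show "\<forall>v\<in>V. (\<forall>b\<in>B. v$b = 0) \<longrightarrow> v = 0"
  proof (intro ballI impI)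
    fix v assume v: "v \<in> V" and z: "\<forall>b\<in>B. v$b = 0"
    obtain c where c: "v = (\<Sum>i<k. c i *s a i)" using span_image_sum[of "{..<k}" v a] sp v by auto
    have "\<forall>j<k. (\<Sum>i<k. a i $ e j * c i) = 0"
    proof (intro allI impI)
      fix j assume "j < k"
      then have "e j \<in> B" using bij bij_betwE by blast
      then have "v $ e j = 0" using z by blast
      then show "(\<Sum>i<k. a i $ e j * c i) = 0" unfolding c sum_scale_component
        by (simp add: mult.commute)
    qed
    then have "\<forall>i<k. c i = 0" using det det_nat_nonzero_iff[of k "\<lambda>i j. a i $ e j"] by blast
    then show "v = 0" unfolding c by simp
  qed
qed

lemma MV_basis_intro:
  assumes V: "vec.subspace V" and cB: "card B = vec.dim V"
    and inj: "\<forall>v\<in>V. (\<forall>b\<in>B. v$b = 0) \<longrightarrow> v = 0"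
  shows "MV_basis V B"
proof -
  define k where "k = vec.dim V"
  obtain \<beta> where \<beta>: "\<beta> \<subseteq> V" "vec.independent \<beta>" "V \<subseteq> vec.span \<beta>" "card \<beta> = vec.dim V"
    using vec.basis_exists by blast
  have fin: "finite \<beta>" using \<beta>(2) vec.finiteI_independent by blast
  obtain a where a: "bij_betw a {..<k} \<beta>"
    using ex_bij_betw_nat_finite[OF fin] \<beta>(4) k_def by (auto simp: lessThan_atLeast0)
  obtain e where e: "bij_betw e {..<k} B"
    using ex_bij_betw_nat_finite[of B] cB k_def by (auto simp: lessThan_atLeast0)
  have img: "a ` {..<k} = \<beta>" using a bij_betw_imp_surj_on by blast
  have sp: "vec.span (a ` {..<k}) = V"
    using img \<beta>(1,3) vec.span_minimal[OF \<beta>(1) V] by auto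
  have "det_nat k (\<lambda>i j. a i $ e j) \<noteq> 0"
    unfolding det_nat_nonzero_iff
  proof (intro allI impI)
    fix d i assume h: "\<forall>j<k. (\<Sum>i<k. a i $ e j * d i) = 0" and i: "i < k"
    define v where "v = (\<Sum>i<k. d i *s a i)"
    have vV: "v \<in> V" unfolding v_def
      by (rule vec.subspace_sum[OF V], rule vec.subspace_scale[OF V]) (use img \<beta>(1) in auto)
    have "\<forall>b\<in>B. v$b = 0"
    proof
      fix b assume "b \<in> B"
      then obtain j where j: "j < k" "b = e j" using e bij_betw_imp_surj_on by force
      show "v $ b = 0" using h j unfolding v_def sum_scale_component by (simp add: mult.commute)
    qed
    then have v0: "v = 0" using inj vV by blast
    have ainj: "inj_on a {..<k}" using a bij_betw_imp_inj_on by blast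
    define u where "u x = d (inv_into {..<k} a x)" for x
    have "(\<Sum>x\<in>\<beta>. u x *s x) = (\<Sum>i<k. u (a i) *s a i)"
      unfolding img[symmetric] by (rule sum.reindex[OF ainj, unfolded comp_def])
    also have "\<dots> = v" unfolding v_def u_def
      by (rule sum.cong) (use ainj in auto)
    finally have "(\<Sum>x\<in>\<beta>. u x *s x) = 0" using v0 by simp
    then have "\<forall>x\<in>\<beta>. u x = 0" using \<beta>(2) vec.dependent_finite[OF fin] by blast
    then have "u (a i) = 0" using i img by blast
    then show "d i = 0" unfolding u_def using ainj i by simp
  qed
  then show ?thesis unfolding MV_basis_def Let_def k_def[symmetric] using sp e by blast
qed

lemma dim_Zs_step:
  assumes W: "vec.subspace W" and w0: "w0 \<in> W" "w0 $ j \<noteq> 0"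
  shows "vec.dim (W \<inter> Zs {j}) + 1 = vec.dim W"
proof -
  have sub: "vec.subspace (W \<inter> Zs {j})" using W subspace_Zs vec.subspace_inter by blast
  obtain \<beta> where \<beta>: "\<beta> \<subseteq> W \<inter> Zs {j}" "vec.independent \<beta>" "W \<inter> Zs {j} \<subseteq> vec.span \<beta>"
      "card \<beta> = vec.dim (W \<inter> Zs {j})"
    using vec.basis_exists by blast
  have fin: "finite \<beta>" using \<beta>(2) vec.finiteI_independent by blast
  have sp\<beta>: "vec.span \<beta> \<subseteq> W \<inter> Zs {j}" using \<beta>(1) sub vec.span_minimal by blast
  have nin: "w0 \<notin> vec.span \<beta>" using sp\<beta> w0(2) by (auto simp: Zs_def)
  have ind: "vec.independent (insert w0 \<beta>)" using \<beta>(2) nin vec.independent_insertI by blast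
  have "W \<subseteq> vec.span (insert w0 \<beta>)"
  proof
    fix w assume w: "w \<in> W"
    let ?k = "w $ j / w0 $ j"
    have "w - ?k *s w0 \<in> W" using W w w0(1) vec.subspace_diff vec.subspace_scale by blast
    moreover have "(w - ?k *s w0) $ j = 0" using w0(2) by simp
    ultimately have "w - ?k *s w0 \<in> vec.span \<beta>" using \<beta>(3) by (auto simp: Zs_def)
    then show "w \<in> vec.span (insert w0 \<beta>)" using vec.span_breakdown_eq by blast
  qed
  moreover have "insert w0 \<beta> \<subseteq> W" using \<beta>(1) w0(1) by auto
  ultimately have "card (insert w0 \<beta>) = vec.dim W" using ind vec.basis_card_eq_dim by blast
  moreover have "w0 \<notin> \<beta>" using nin vec.span_base by blast
  ultimately show ?thesis using fin \<beta>(4) by simp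
qed

lemma dim_Zs_step0: "(\<forall>w\<in>W. w $ j = 0) \<Longrightarrow> W \<inter> Zs {j} = W" by (auto simp: Zs_def)

lemma dim_Zs_le:
  assumes "finite T" and W: "vec.subspace W"
  shows "vec.dim W \<le> vec.dim (W \<inter> Zs T) + card T"
  using assms(1)
proof (induction T rule: finite_induct)
  case empty then show ?case by simp
next
  case (insert j T)
  let ?W = "W \<inter> Zs T"
  have sub: "vec.subspace ?W" using W subspace_Zs vec.subspace_inter by blast
  have eq: "W \<inter> Zs (insert j T) = ?W \<inter> Zs {j}" by (auto simp: Zs_def)
  have "vec.dim ?W \<le> vec.dim (?W \<inter> Zs {j}) + 1"
  proof (cases "\<exists>w\<in>?W. w $ j \<noteq> 0")
    case True then show ?thesis using dim_Zs_step[OF sub] by force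
  next
    case False then show ?thesis using dim_Zs_step0[of ?W j] by simp
  qed
  then show ?case using insert eq by simp
qed

lemma basis_card_le:
  assumes V: "vec.subspace V" and cB: "card B = vec.dim V"
    and inj: "\<forall>v\<in>V. (\<forall>b\<in>B. v$b = 0) \<longrightarrow> v = 0"
  shows "card (B \<inter> U) \<le> vec.dim V - vec.dim (V \<inter> Zs U)"
proof -
  let ?W = "V \<inter> Zs U"
  have sub: "vec.subspace ?W" using V subspace_Zs vec.subspace_inter by blast
  have "vec.dim ?W \<le> vec.dim (?W \<inter> Zs (B - U)) + card (B - U)"
    using dim_Zs_le[OF _ sub] by simp
  moreover have "?W \<inter> Zs (B - U) \<subseteq> {0}"
  proof
    fix v assume v: "v \<in> ?W \<inter> Zs (B - U)"
    then have "\<forall>b\<in>B. v $ b = 0" by (auto simp: Zs_def)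
    then show "v \<in> {0}" using inj v by blast
  qed
  then have "vec.dim (?W \<inter> Zs (B - U)) = 0" using vec.dim_eq_0 by blast
  moreover have "card (B - U) = card B - card (B \<inter> U)"
    by (rule card_Diff_subset_Int) simp
  moreover have "card (B \<inter> U) \<le> card B" by (simp add: card_mono)
  ultimately show ?thesis using cB by linarith
qed

definition Gr :: "('n::finite \<Rightarrow> nat) \<Rightarrow> (complex^'n) set \<Rightarrow> 'n set" where
  "Gr f V = {t. \<exists>v\<in>V. (\<forall>s. f s < f t \<longrightarrow> v $ s = 0) \<and> v $ t \<noteq> 0}"

lemma Gr_mono: "V \<subseteq> V' \<Longrightarrow> Gr f V \<subseteq> Gr f V'"
  unfolding Gr_def by blast

lemma greedy_count:
  fixes f :: "'n::finite \<Rightarrow> nat"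
  assumes V: "vec.subspace V" and inj: "inj f" and rng: "range f = {..<N}"
  shows "j \<le> N \<Longrightarrow> card (Gr f V \<inter> {t. f t < j}) + vec.dim (V \<inter> Zs {t. f t < j}) = vec.dim V"
proof (induction j)
  case 0 then show ?case by simp
next
  case (Suc j)
  then have jN: "j < N" by simp
  have "j \<in> range f" using rng jN by simp
  then obtain t0 where t0: "f t0 = j" by blast
  let ?S = "{t. f t < j}"
  have S': "{t. f t < Suc j} = insert t0 ?S"
    using t0 inj by (auto simp: less_Suc_eq injD)
  have t0S: "t0 \<notin> ?S" using t0 by simp
  let ?W = "V \<inter> Zs ?S"
  have Wsub: "vec.subspace ?W" using V subspace_Zs vec.subspace_inter by blast
  have Zeq: "V \<inter> Zs {t. f t < Suc j} = ?W \<inter> Zs {t0}"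
    unfolding S' by (auto simp: Zs_def)
  have memG: "t0 \<in> Gr f V \<longleftrightarrow> (\<exists>w\<in>?W. w $ t0 \<noteq> 0)" unfolding Gr_def Zs_def using t0 by auto
  have IH: "card (Gr f V \<inter> ?S) + vec.dim ?W = vec.dim V" using Suc jN by simp
  show ?case
  proof (cases "t0 \<in> Gr f V")
    case True
    then obtain w where "w \<in> ?W" "w $ t0 \<noteq> 0" using memG by blast
    then have d: "vec.dim (?W \<inter> Zs {t0}) + 1 = vec.dim ?W" using dim_Zs_step Wsub by blast
    have "Gr f V \<inter> {t. f t < Suc j} = insert t0 (Gr f V \<inter> ?S)" using S' True by auto
    moreover have "card (insert t0 (Gr f V \<inter> ?S)) = card (Gr f V \<inter> ?S) + 1" using t0S by simp
    ultimately show ?thesis using IH d Zeq by simp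
  next
    case False
    then have "?W \<inter> Zs {t0} = ?W" using memG dim_Zs_step0 by blast
    moreover have "Gr f V \<inter> {t. f t < Suc j} = Gr f V \<inter> ?S" using S' False by auto
    ultimately show ?thesis using IH Zeq by simp
  qed
qed

lemma greedy_props:
  fixes f :: "'n::finite \<Rightarrow> nat"
  assumes V: "vec.subspace V" and inj: "inj f" and rng: "range f = {..<N}"
  shows "card (Gr f V) = vec.dim V"
    and "\<forall>v\<in>V. (\<forall>b\<in>Gr f V. v$b = 0) \<longrightarrow> v = 0"
    and "m \<le> N \<Longrightarrow> card (Gr f V \<inter> {t. f t < m}) = vec.dim V - vec.dim (V \<inter> Zs {t. f t < m})"
proof -
  have U: "{t. f t < N} = UNIV" using rng by auto
  have "V \<inter> Zs UNIV \<subseteq> {0}" by (simp add: Zs_UNIV)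
  then have d0: "vec.dim (V \<inter> Zs UNIV) = 0" using vec.dim_eq_0 by blast
  have "card (Gr f V) + vec.dim (V \<inter> Zs UNIV) = vec.dim V"
    using greedy_count[OF V inj rng, of N] U by simp
  then show "card (Gr f V) = vec.dim V" using d0 by linarith
next
  show "\<forall>v\<in>V. (\<forall>b\<in>Gr f V. v$b = 0) \<longrightarrow> v = 0"
  proof (intro ballI impI)
    fix v assume v: "v \<in> V" and z: "\<forall>b\<in>Gr f V. v$b = 0"
    show "v = 0"
    proof (rule ccontr)
      assume "v \<noteq> 0"
      then obtain t where "v $ t \<noteq> 0" by (auto simp: Finite_Cartesian_Product.vec_eq_iff)
      then obtain t' where t': "v $ t' \<noteq> 0" "\<forall>s. v $ s \<noteq> 0 \<longrightarrow> f t' \<le> f s"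
        using ex_has_least_nat[of "\<lambda>t. v $ t \<noteq> 0" t f] by blast
      have "\<forall>s. f s < f t' \<longrightarrow> v $ s = 0" using t'(2) by (meson not_le)
      then have "t' \<in> Gr f V" unfolding Gr_def using v t'(1) by blast
      then show False using z t'(1) by blast
    qed
  qed
next
  assume "m \<le> N"
  then show "card (Gr f V \<inter> {t. f t < m}) = vec.dim V - vec.dim (V \<inter> Zs {t. f t < m})"
    using greedy_count[OF V inj rng, of m] by simp
qed

lemma ordering_exists:
  fixes U :: "'n::finite set"
  shows "\<exists>f N. inj f \<and> range f = {..<N} \<and> U = {t. f t < card U}"
proof -
  obtain h1 where h1: "bij_betw h1 U {0..<card U}" using ex_bij_betw_finite_nat[of U] by auto
  obtain h2 where h2: "bij_betw h2 (-U) {0..<card (-U)}" using ex_bij_betw_finite_nat[of "-U"] by auto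
  define f where "f t = (if t \<in> U then h1 t else card U + h2 t)" for t
  have h1i: "inj_on h1 U" and h1r: "h1 ` U = {0..<card U}" using h1 by (auto simp: bij_betw_def)
  have h2i: "inj_on h2 (-U)" and h2r: "h2 ` (-U) = {0..<card (-U)}" using h2 by (auto simp: bij_betw_def)
  have "inj f"
  proof (rule injI)
    fix x y assume xy: "f x = f y"
    show "x = y"
    proof (cases "x \<in> U")
      case True
      then have hx: "h1 x < card U" using h1r by auto
      show ?thesis
      proof (cases "y \<in> U")
        case True
        then show ?thesis using \<open>x \<in> U\<close> xy h1i unfolding f_def by (auto dest: inj_onD)
      next
        case False
        then show ?thesis using \<open>x \<in> U\<close> xy hx unfolding f_def by auto
      qed
    next
      case False
      show ?thesis
      proof (cases "y \<in> U")
        case True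
        then have "h1 y < card U" using h1r by auto
        then show ?thesis using \<open>x \<notin> U\<close> True xy unfolding f_def by auto
      next
        case False
        then show ?thesis using \<open>x \<notin> U\<close> xy h2i unfolding f_def by (auto dest: inj_onD)
      qed
    qed
  qed
  moreover have "range f = {..<card U + card (-U)}"
  proof
    show "range f \<subseteq> {..<card U + card (- U)}"
    proof
      fix x assume "x \<in> range f"
      then obtain t where t: "x = f t" by blast
      show "x \<in> {..<card U + card (- U)}"
      proof (cases "t \<in> U")
        case True then have "h1 t < card U" using h1r by auto
        then show ?thesis using t True unfolding f_def by simp
      next
        case False then have "h2 t < card (-U)" using h2r by auto
        then show ?thesis using t False unfolding f_def by simp
      qed
    qed
  next
    show "{..<card U + card (- U)} \<subseteq> range f"
    proof
      fix n assume n: "n \<in> {..<card U + card (- U)}"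
      show "n \<in> range f"
      proof (cases "n < card U")
        case True
        then have "n \<in> h1 ` U" using h1r by simp
        then obtain t where "t \<in> U" "h1 t = n" by blast
        then have "f t = n" unfolding f_def by auto
        then show ?thesis by blast
      next
        case False
        have "n < card U + card (- U)" using n by (simp only: lessThan_iff)
        then have "n - card U < card (- U)" using False by linarith
        then have "n - card U \<in> {0..<card (- U)}" by (simp only: atLeastLessThan_iff) simp
        then have "n - card U \<in> h2 ` (-U)" by (simp only: h2r)
        then obtain t where "t \<in> -U" "h2 t = n - card U" by (metis imageE)
        then have "f t = n" unfolding f_def using False by auto
        then show ?thesis by blast
      qed
    qed
  qed
  moreover have "U = {t. f t < card U}"
  proof (intro Set.set_eqI HOL.iffI)
    fix t assume "t \<in> U" then show "t \<in> {t. f t < card U}" using h1r unfolding f_def by auto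
  next
    fix t assume "t \<in> {t. f t < card U}" then show "t \<in> U" unfolding f_def by (auto split: if_splits)
  qed
  ultimately show ?thesis by blast
qed

lemma rows_exist:
  assumes V: "vec.subspace V"
  shows "\<exists>rw::'n::finite \<Rightarrow> complex^'n. vec.span (range rw) = V"
proof -
  obtain \<beta> where \<beta>: "\<beta> \<subseteq> V" "vec.independent \<beta>" "V \<subseteq> vec.span \<beta>" "card \<beta> = vec.dim V"
    using vec.basis_exists by blast
  have fin: "finite \<beta>" using \<beta>(2) vec.finiteI_independent by blast
  have "card \<beta> \<le> card (UNIV::'n set)" using \<beta>(4) dim_subset_UNIV_cart_gen[of V] by simp
  then obtain g :: "complex^'n \<Rightarrow> 'n" where g: "inj_on g \<beta>"
    using card_le_inj[of \<beta> "UNIV::'n set"] fin by auto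
  define rw where "rw t = (if t \<in> g ` \<beta> then the_inv_into \<beta> g t else 0)" for t
  have r1: "range rw \<subseteq> insert 0 \<beta>"
    using the_inv_into_into[OF g] by (auto simp: rw_def)
  have r2: "\<beta> \<subseteq> range rw"
  proof
    fix b assume b: "b \<in> \<beta>"
    then have "rw (g b) = b" unfolding rw_def using the_inv_into_f_f[OF g b] by simp
    then show "b \<in> range rw" by (metis rangeI)
  qed
  have "vec.span (range rw) \<subseteq> vec.span (insert 0 \<beta>)" using r1 vec.span_mono by blast
  also have "\<dots> = vec.span \<beta>" by simp
  also have "\<dots> \<subseteq> V" using vec.span_minimal[OF \<beta>(1) V] .
  finally have "vec.span (range rw) \<subseteq> V" .
  moreover have "V \<subseteq> vec.span (range rw)" using \<beta>(3) vec.span_mono[OF r2] by blast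
  ultimately show ?thesis by blast
qed

definition colv :: "('n::finite \<Rightarrow> complex^'n) \<Rightarrow> 'n \<Rightarrow> complex^'n" where
  "colv rw a = (\<chi> t. rw t $ a)"

lemma col_in_span_imp:
  assumes rows: "vec.span (range rw) = V"
    and c: "colv rw a \<in> vec.span (colv rw ` A)"
  shows "\<forall>v\<in>V \<inter> Zs A. v $ a = 0"
proof
  fix v assume v: "v \<in> V \<inter> Zs A"
  obtain c where c: "colv rw a = (\<Sum>b\<in>A. c b *s colv rw b)"
    using span_image_sum[of A "colv rw a" "colv rw"] c by auto
  have rt: "rw t $ a = (\<Sum>b\<in>A. c b * rw t $ b)" for t
    using arg_cong[OF c, of "\<lambda>x. x $ t"] by (simp add: colv_def sum_scale_component)
  obtain \<mu> where \<mu>: "v = (\<Sum>t\<in>UNIV. \<mu> t *s rw t)"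
    using span_image_sum[of UNIV v rw] rows v by auto
  have vb: "v $ b = (\<Sum>t\<in>UNIV. \<mu> t * rw t $ b)" for b
    using arg_cong[OF \<mu>, of "\<lambda>x. x $ b"] by (simp add: sum_scale_component)
  have "v $ a = (\<Sum>t\<in>UNIV. \<mu> t * (\<Sum>b\<in>A. c b * rw t $ b))" by (simp add: vb rt)
  also have "\<dots> = (\<Sum>t\<in>UNIV. \<Sum>b\<in>A. c b * (\<mu> t * rw t $ b))"
    by (simp add: sum_distrib_left mult.left_commute)
  also have "\<dots> = (\<Sum>b\<in>A. \<Sum>t\<in>UNIV. c b * (\<mu> t * rw t $ b))" by (rule sum.swap)
  also have "\<dots> = (\<Sum>b\<in>A. c b * v $ b)" by (simp add: vb sum_distrib_left)
  also have "\<dots> = 0" using v by (simp add: Zs_def)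
  finally show "v $ a = 0" .
qed

lemma col_not_in_span_imp:
  fixes rw :: "'n::finite \<Rightarrow> complex^'n"
  assumes V: "vec.subspace V" and rows: "vec.span (range rw) = V"
    and nc: "colv rw a \<notin> vec.span (colv rw ` A)"
  shows "\<exists>v\<in>V \<inter> Zs A. v $ a \<noteq> 0"
proof -
  let ?C = "colv rw ` A" and ?x = "colv rw a"
  obtain \<beta> where \<beta>: "\<beta> \<subseteq> ?C" "vec.independent \<beta>" "?C \<subseteq> vec.span \<beta>"
    "card \<beta> = vec.dim ?C"
    by (rule vec.basis_exists[of ?C])
  have "vec.span \<beta> \<subseteq> vec.span ?C" using \<beta>(1) vec.span_mono by blast
  then have nx: "?x \<notin> vec.span \<beta>" using nc by blast
  have ind: "vec.independent (insert ?x \<beta>)" using vec.independent_insertI[OF nx \<beta>(2)] .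
  obtain g where g: "Vector_Spaces.linear (*s) (*s) g"
    "\<forall>y\<in>insert ?x \<beta>. g y = (if y = ?x then (\<chi> t. 1) else (0::complex^'n))"
    using vec.linear_independent_extend[OF ind, of "\<lambda>y. if y = ?x then (\<chi> t. 1) else 0"] by blast
  have gx: "g ?x = (\<chi> t. 1)" using g(2) by simp
  have g\<beta>: "\<forall>y\<in>\<beta>. g y = 0"
  proof
    fix y assume y: "y \<in> \<beta>"
    then have "y \<noteq> ?x" using nx vec.span_base by blast
    then show "g y = 0" using g(2) y by simp
  qed
  have gC: "g (colv rw b) = 0" if "b \<in> A" for b
  proof -
    have "colv rw b \<in> vec.span \<beta>" using \<beta>(3) that by blast
    then show ?thesis using vec.linear_eq_0_on_span[OF g(1)] g\<beta> by blast
  qed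
  obtain t0 :: 'n where True by blast
  define M where "M = matrix g"
  define v where "v = (\<Sum>t\<in>UNIV. (M $ t0 $ t) *s rw t)"
  have rV: "rw t \<in> V" for t using rows vec.span_base[of "rw t" "range rw"] by blast
  have vV: "v \<in> V" unfolding v_def
    by (rule vec.subspace_sum[OF V], rule vec.subspace_scale[OF V]) (use rV in auto)
  have vb: "v $ b = g (colv rw b) $ t0" for b
  proof -
    have "v $ b = (\<Sum>t\<in>UNIV. M $ t0 $ t * rw t $ b)" unfolding v_def sum_scale_component ..
    also have "\<dots> = (M *v colv rw b) $ t0" by (simp add: matrix_vector_mult_def colv_def)
    also have "\<dots> = g (colv rw b) $ t0" unfolding M_def matrix_works[OF g(1)] ..
    finally show ?thesis .
  qed
  have "v \<in> Zs A" using vb gC by (simp add: Zs_def)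
  moreover have "v $ a = 1" using vb gx by simp
  ultimately show ?thesis using vV by force
qed

lemma col_dim:
  assumes V: "vec.subspace V" and rows: "vec.span (range rw) = V"
  shows "vec.dim (colv rw ` A) + vec.dim (V \<inter> Zs A) = vec.dim V"
proof -
  have "finite A" by simp
  then show ?thesis
  proof (induction A rule: finite_induct)
    case empty then show ?case by simp
  next
    case (insert a A)
    let ?W = "V \<inter> Zs A"
    have sub: "vec.subspace ?W" using V subspace_Zs vec.subspace_inter by blast
    have eq: "V \<inter> Zs (insert a A) = ?W \<inter> Zs {a}" by (auto simp: Zs_def)
    have img: "colv rw ` insert a A = insert (colv rw a) (colv rw ` A)" by simp
    show ?case
    proof (cases "colv rw a \<in> vec.span (colv rw ` A)")
      case True
      then have "\<forall>v\<in>?W. v $ a = 0" using col_in_span_imp[OF rows] by blast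
      then have "?W \<inter> Zs {a} = ?W" by (rule dim_Zs_step0)
      then show ?thesis using insert.IH True eq img by (simp add: vec.dim_insert)
    next
      case False
      then obtain w where "w \<in> ?W" "w $ a \<noteq> 0" using col_not_in_span_imp[OF V rows] by blast
      then have "vec.dim (?W \<inter> Zs {a}) + 1 = vec.dim ?W" using dim_Zs_step[OF sub] by blast
      then show ?thesis using insert.IH False eq img by (simp add: vec.dim_insert)
    qed
  qed
qed

lemma pair1: "finite_dimensional_vector_space_pair_1 ((*s) :: complex \<Rightarrow> complex^'n::finite \<Rightarrow> _) cart_basis fscale"
  by unfold_locales

definition emb :: "nat \<Rightarrow> complex^'n::finite \<Rightarrow> (nat \<Rightarrow> complex)" where
  "emb i c = (\<lambda>m. if fst (prod_decode m) = i \<and> snd (prod_decode m) \<in> range (to_nat :: 'n \<Rightarrow> nat)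
      then c $ from_nat (snd (prod_decode m)) else 0)"

lemma emb_lin: "Vector_Spaces.linear (*s) fscale (emb i :: complex^'n::finite \<Rightarrow> _)"
  unfolding Vector_Spaces.linear_iff
  by (auto simp: emb_def fscale_def fun_eq_iff vec.vector_space_axioms fvec.vector_space_axioms algebra_simps)

lemma emb_inj: "inj (emb i :: complex^'n::finite \<Rightarrow> _)"
proof (rule injI)
  fix c d :: "complex^'n" assume h: "emb i c = emb i d"
  show "c = d"
  proof (rule Finite_Cartesian_Product.vec_eq_iff[THEN iffD2], rule allI)
    fix t :: 'n
    have "emb i c (prod_encode (i, to_nat t)) = emb i d (prod_encode (i, to_nat t))" using h by simp
    then show "c $ t = d $ t" by (simp add: emb_def)
  qed
qed

lemma dim_emb: "fvec.dim (emb i ` S) = vec.dim (S :: (complex^'n::finite) set)"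
  using finite_dimensional_vector_space_pair_1.dim_image_eq[OF pair1 emb_lin] emb_inj
  by (metis inj_on_subset subset_UNIV)

definition Blk :: "nat set \<Rightarrow> (nat \<Rightarrow> complex) set" where
  "Blk I = {g. \<forall>m. g m \<noteq> 0 \<longrightarrow> fst (prod_decode m) \<in> I}"

lemma subspace_Blk: "fvec.subspace (Blk I)"
  unfolding fvec.subspace_def Blk_def by (auto simp: fscale_def) (metis add.right_neutral)

lemma emb_Blk: "emb i c \<in> Blk {i}"
  unfolding Blk_def emb_def by auto

lemma dim_union_disjoint:
  assumes X: "finite X" and Y: "finite Y" and d: "fvec.span X \<inter> fvec.span Y \<subseteq> {0}"
  shows "fvec.dim (X \<union> Y) = fvec.dim X + fvec.dim Y"
proof -
  obtain bX where bX: "bX \<subseteq> X" "fvec.independent bX" "X \<subseteq> fvec.span bX" "card bX = fvec.dim X"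
    by (rule fvec.basis_exists[of X])
  obtain bY where bY: "bY \<subseteq> Y" "fvec.independent bY" "Y \<subseteq> fvec.span bY" "card bY = fvec.dim Y"
    by (rule fvec.basis_exists[of Y])
  have fX: "finite bX" using bX(1) X finite_subset by blast
  have fY: "finite bY" using bY(1) Y finite_subset by blast
  have spX: "fvec.span bX \<subseteq> fvec.span X" using bX(1) fvec.span_mono by blast
  have spY: "fvec.span bY \<subseteq> fvec.span Y" using bY(1) fvec.span_mono by blast
  have disj: "bX \<inter> bY = {}"
  proof (rule ccontr)
    assume "bX \<inter> bY \<noteq> {}"
    then obtain v where v: "v \<in> bX" "v \<in> bY" by blast
    then have "v \<in> fvec.span X \<inter> fvec.span Y"
      using spX spY fvec.span_base[of v bX] fvec.span_base[of v bY] by blast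
    then have "v = 0" using d by blast
    then show False using v(1) bX(2) fvec.dependent_zero by blast
  qed
  have ind: "fvec.independent (bX \<union> bY)"
  proof -
    have "\<not> fvec.dependent (bX \<union> bY)"
    proof
      assume "fvec.dependent (bX \<union> bY)"
      then obtain u where u: "\<exists>v\<in>bX \<union> bY. u v \<noteq> 0" "(\<Sum>v\<in>bX \<union> bY. fscale (u v) v) = 0"
        using fvec.dependent_finite[of "bX \<union> bY"] fX fY by auto
      let ?sx = "\<Sum>v\<in>bX. fscale (u v) v" and ?sy = "\<Sum>v\<in>bY. fscale (u v) v"
      have "?sx + ?sy = (\<Sum>v\<in>bX \<union> bY. fscale (u v) v)"
        by (rule sum.union_disjoint[OF fX fY disj, symmetric])
      then have "?sx + ?sy = 0" using u(2) by simp
      then have eq: "?sx = - ?sy" by (simp add: eq_neg_iff_add_eq_0)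
      have "?sx \<in> fvec.span bX" by (intro fvec.span_sum fvec.span_scale fvec.span_base)
      moreover have "- ?sy \<in> fvec.span bY" by (intro fvec.span_neg fvec.span_sum fvec.span_scale fvec.span_base)
      ultimately have "?sx \<in> fvec.span X \<inter> fvec.span Y" using eq spX spY by auto
      then have sx0: "?sx = 0" using d by blast
      then have sy0: "?sy = 0" using eq by simp
      have "\<forall>v\<in>bX. u v = 0" using sx0 bX(2) fvec.dependent_finite[OF fX] by blast
      moreover have "\<forall>v\<in>bY. u v = 0" using sy0 bY(2) fvec.dependent_finite[OF fY] by blast
      ultimately show False using u(1) by blast
    qed
    then show ?thesis by simp
  qed
  have "card (bX \<union> bY) = fvec.dim (X \<union> Y)"
  proof (rule fvec.basis_card_eq_dim)
    show "bX \<union> bY \<subseteq> X \<union> Y" using bX(1) bY(1) by blast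
    show "X \<union> Y \<subseteq> fvec.span (bX \<union> bY)"
      using bX(3) bY(3) fvec.span_mono[of bX "bX \<union> bY"] fvec.span_mono[of bY "bX \<union> bY"] by blast
    show "fvec.independent (bX \<union> bY)" by (rule ind)
  qed
  moreover have "card (bX \<union> bY) = card bX + card bY" using card_Un_disjoint[OF fX fY disj] .
  ultimately show ?thesis using bX(4) bY(4) by simp
qed

lemma dim_blocks:
  assumes fin: "\<And>i. i < s \<Longrightarrow> finite (X i)" and blk: "\<And>i. i < s \<Longrightarrow> X i \<subseteq> Blk {i}"
  shows "fvec.dim (\<Union>i<s. X i) = (\<Sum>i<s. fvec.dim (X i))"
  using fin blk
proof (induction s)
  case 0 then show ?case using fvec.dim_eq_card_independent[OF fvec.independent_empty] by simp
next
  case (Suc s)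
  have eq: "(\<Union>i<Suc s. X i) = (\<Union>i<s. X i) \<union> X s" by (auto simp: lessThan_Suc)
  have f1: "finite (\<Union>i<s. X i)" using Suc.prems(1) by simp
  have f2: "finite (X s)" using Suc.prems(1) by simp
  have s1: "fvec.span (\<Union>i<s. X i) \<subseteq> Blk {..<s}"
  proof (rule fvec.span_minimal[OF _ subspace_Blk])
    show "(\<Union>i<s. X i) \<subseteq> Blk {..<s}"
    proof
      fix x assume "x \<in> (\<Union>i<s. X i)"
      then obtain i where i: "i < s" "x \<in> X i" by blast
      then have "x \<in> Blk {i}" using Suc.prems(2)[of i] by auto
      then show "x \<in> Blk {..<s}" using i(1) by (auto simp: Blk_def)
    qed
  qed
  have s2: "fvec.span (X s) \<subseteq> Blk {s}"
    by (rule fvec.span_minimal[OF _ subspace_Blk]) (use Suc.prems(2) in simp)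
  have "Blk {..<s} \<inter> Blk {s} \<subseteq> {0}"
    by (auto simp: Blk_def fun_eq_iff)
  then have "fvec.span (\<Union>i<s. X i) \<inter> fvec.span (X s) \<subseteq> {0}" using s1 s2 by blast
  then have "fvec.dim (\<Union>i<Suc s. X i) = fvec.dim (\<Union>i<s. X i) + fvec.dim (X s)"
    unfolding eq using dim_union_disjoint[OF f1 f2] by blast
  then show ?case using Suc by simp
qed

lemma span_Union_span:
  "fvec.span (\<Union>a\<in>A. fvec.span (S a)) = fvec.span (\<Union>a\<in>A. S a)"
proof
  have "(\<Union>a\<in>A. fvec.span (S a)) \<subseteq> fvec.span (\<Union>a\<in>A. S a)"
    using fvec.span_mono by (metis UN_least UN_upper)
  then show "fvec.span (\<Union>a\<in>A. fvec.span (S a)) \<subseteq> fvec.span (\<Union>a\<in>A. S a)"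
    using fvec.span_minimal fvec.subspace_span by blast
next
  have "(\<Union>a\<in>A. S a) \<subseteq> (\<Union>a\<in>A. fvec.span (S a))" using fvec.span_superset by blast
  then show "fvec.span (\<Union>a\<in>A. S a) \<subseteq> fvec.span (\<Union>a\<in>A. fvec.span (S a))"
    using fvec.span_mono by blast
qed

lemma indic_inner: "x \<bullet> indic_vec T = (\<Sum>t\<in>T. x $ t)" for x :: "real^'n::finite"
proof -
  have "x \<bullet> indic_vec T = (\<Sum>t\<in>UNIV. if t \<in> T then x $ t else 0)"
    unfolding inner_vec_def indic_vec_def by (intro sum.cong) auto
  also have "\<dots> = (\<Sum>t\<in>T. x $ t)" by (simp add: sum.If_cases)
  finally show ?thesis .
qed

lemma poly_greedy:
  fixes r :: "'n::finite set \<Rightarrow> nat" and f :: "'n \<Rightarrow> nat"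
  assumes P: "polymatroid r" and inj: "inj f" and rng: "range f = {..<N}" and m: "m \<le> N"
  shows "\<exists>x. x \<in> polymatroid_base_polytope r \<and> x \<bullet> indic_vec {t. f t < m} = real (r {t. f t < m})"
proof -
  define S where "S j = {t. f t < j}" for j
  define x :: "real^'n" where "x = (\<chi> t. real (r (S (Suc (f t)))) - real (r (S (f t))))"
  have r0: "r {} = 0" and mono: "\<And>A B. A \<subseteq> B \<Longrightarrow> r A \<le> r B"
    and sub: "\<And>A B. r (A \<union> B) + r (A \<inter> B) \<le> r A + r B"
    using P unfolding polymatroid_def by auto
  have Ssub: "S j \<subseteq> S (Suc j)" for j unfolding S_def by auto
  have step: "\<exists>t0. f t0 = j \<and> S (Suc j) = insert t0 (S j) \<and> t0 \<notin> S j" if "j < N" for j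
  proof -
    have "j \<in> range f" using rng that by simp
    then obtain t0 where t0: "f t0 = j" by blast
    have "S (Suc j) = insert t0 (S j)" unfolding S_def using t0 inj by (auto simp: less_Suc_eq injD)
    moreover have "t0 \<notin> S j" unfolding S_def using t0 by simp
    ultimately show ?thesis using t0 by blast
  qed
  have xt: "x $ t = real (r (S (Suc (f t)))) - real (r (S (f t)))" for t unfolding x_def by simp
  have xnn: "x $ t \<ge> 0" for t unfolding xt using mono[OF Ssub] by simp
  have sumS: "(\<Sum>t\<in>S j. x $ t) = real (r (S j))" if "j \<le> N" for j
    using that
  proof (induction j)
    case 0 then show ?case by (simp add: S_def r0)
  next
    case (Suc j)
    have jN: "j < N" using Suc.prems by simp
    then obtain t0 where t0: "f t0 = j" "S (Suc j) = insert t0 (S j)" "t0 \<notin> S j" using step by blast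
    have "(\<Sum>t\<in>S (Suc j). x $ t) = x $ t0 + (\<Sum>t\<in>S j. x $ t)" using t0(2,3) by simp
    also have "\<dots> = real (r (S (Suc j)))" using Suc t0(1) xt[of t0] by simp
    finally show ?case .
  qed
  have sumT: "(\<Sum>t\<in>T \<inter> S j. x $ t) \<le> real (r (T \<inter> S j))" if "j \<le> N" for j T
    using that
  proof (induction j)
    case 0 then show ?case by (simp add: S_def r0)
  next
    case (Suc j)
    have jN: "j < N" using Suc.prems by simp
    then obtain t0 where t0: "f t0 = j" "S (Suc j) = insert t0 (S j)" "t0 \<notin> S j" using step by blast
    have IH: "(\<Sum>t\<in>T \<inter> S j. x $ t) \<le> real (r (T \<inter> S j))" using Suc by simp
    show ?case
    proof (cases "t0 \<in> T")
      case True
      have e1: "T \<inter> S (Suc j) = insert t0 (T \<inter> S j)" using t0(2) True by auto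
      have e2: "(T \<inter> S (Suc j)) \<union> S j = S (Suc j)" using t0(2) True by auto
      have e3: "(T \<inter> S (Suc j)) \<inter> S j = T \<inter> S j" using Ssub by auto
      have sm: "r (S (Suc j)) + r (T \<inter> S j) \<le> r (T \<inter> S (Suc j)) + r (S j)"
        using sub[of "T \<inter> S (Suc j)" "S j"] e2 e3 by simp
      have "(\<Sum>t\<in>T \<inter> S (Suc j). x $ t) = x $ t0 + (\<Sum>t\<in>T \<inter> S j. x $ t)"
        unfolding e1 using t0(3) by simp
      also have "\<dots> \<le> real (r (S (Suc j))) - real (r (S j)) + real (r (T \<inter> S j))"
        using IH xt[of t0] t0(1) by simp
      also have "\<dots> \<le> real (r (T \<inter> S (Suc j)))" using sm by linarith
      finally show ?thesis .
    next
      case False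
      then have "T \<inter> S (Suc j) = T \<inter> S j" using t0(2) by auto
      then show ?thesis using IH by simp
    qed
  qed
  have SN: "S N = UNIV" unfolding S_def using rng by auto
  have "x \<in> polymatroid_base_polytope r"
    unfolding polymatroid_base_polytope_def
  proof (intro CollectI conjI allI)
    fix i show "0 \<le> x $ i" by (rule xnn)
  next
    fix U
    show "x \<bullet> indic_vec U \<le> real (r U)"
      using sumT[of N U] SN by (simp add: indic_inner)
  next
    show "x \<bullet> indic_vec UNIV = real (r UNIV)" using sumS[of N] SN by (simp add: indic_inner)
  qed
  moreover have "x \<bullet> indic_vec {t. f t < m} = real (r {t. f t < m})"
    using sumS[OF m] by (simp add: indic_inner S_def)
  ultimately show ?thesis by blast
qed

lemma flag_inner: "sum_list (map indic_vec F) \<bullet> indic_vec U = (\<Sum>B\<leftarrow>F. real (card (B \<inter> U)))"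
proof (induction F)
  case Nil then show ?case by simp
next
  case (Cons B F)
  have "indic_vec B \<bullet> indic_vec U = real (card (B \<inter> U))"
    unfolding indic_inner by (simp add: indic_vec_def sum.If_cases Int_commute)
  then show ?case using Cons by (simp add: inner_add_left)
qed

lemma flag_inner2: "sum_list (map indic_vec F) \<bullet> indic_vec U = (\<Sum>i<length F. real (card (F!i \<inter> U)))"
proof -
  have "sum_list (map indic_vec F) \<bullet> indic_vec U = (\<Sum>B\<leftarrow>F. real (card (B \<inter> U)))"
    by (rule flag_inner)
  also have "\<dots> = (\<Sum>i<length F. real (card (F!i \<inter> U)))"
    by (simp add: sum_list_sum_nth atLeast0LessThan)
  finally show ?thesis .
qed

theorem proposition7p5:
  fixes ks :: "nat list" and FF :: "('n::finite set list) set" and r :: "'n set \<Rightarrow> nat"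
  assumes "representable_flag_matroid ks FF"
    and "polymatroid r"
    and "polymatroid_base_polytope r = flag_base_polytope FF"
  shows "representable_polymatroid r"
proof -
  obtain Vs :: "(complex^'n) set list" where
    len: "length Vs = length ks" and
    sub: "\<forall>i<length Vs. vec.subspace (Vs!i) \<and> vec.dim (Vs!i) = ks!i \<and> Vs!i \<noteq> UNIV" and
    chain: "\<forall>i. Suc i < length Vs \<longrightarrow> Vs!i \<subseteq> Vs!Suc i" and
    FF: "FF = {Bs. length Bs = length ks \<and> (\<forall>i. Suc i < length Bs \<longrightarrow> Bs!i \<subseteq> Bs!Suc i) \<and>
                  (\<forall>i<length Bs. MV_basis (Vs!i) (Bs!i))}"
    using assms(1) unfolding representable_flag_matroid_def by blast
  define s where "s = length Vs"
  have subs: "vec.subspace (Vs!i)" if "i < s" for i using sub that s_def by blast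
  define rho where "rho U = (\<Sum>i<s. vec.dim (Vs!i) - vec.dim (Vs!i \<inter> Zs U))" for U
  have key: "r U = rho U" for U
  proof -
    obtain f N where f: "inj f" "range f = {..<N}" "U = {t. f t < card U}"
      using ordering_exists[of U] by blast
    have "card U = card (f ` U)" using f(1) by (simp add: card_image inj_on_subset)
    also have "\<dots> \<le> card {..<N}" using f(2) by (intro card_mono) auto
    finally have cU: "card U \<le> N" by simp
    have rk: "card (Gr f (Vs!i) \<inter> U) = vec.dim (Vs!i) - vec.dim (Vs!i \<inter> Zs U)" if "i < s" for i
      using greedy_props(3)[OF subs[OF that] f(1,2) cU] f(3) by simp
    define F where "F = map (\<lambda>V. Gr f V) Vs"
    have lenF: "length F = s" unfolding F_def s_def by simp
    have "F \<in> FF" unfolding FF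
    proof (intro CollectI conjI allI impI)
      show "length F = length ks" using lenF len s_def by simp
    next
      fix i assume "Suc i < length F"
      then have "Suc i < length Vs" unfolding F_def by simp
      then have "Vs!i \<subseteq> Vs!Suc i" using chain by blast
      then have "Gr f (Vs!i) \<subseteq> Gr f (Vs!Suc i)" by (rule Gr_mono)
      then show "F!i \<subseteq> F!Suc i" using \<open>Suc i < length Vs\<close> unfolding F_def by simp
    next
      fix i assume i: "i < length F"
      then have is': "i < s" using lenF by simp
      show "MV_basis (Vs!i) (F!i)" unfolding F_def using is'
        by (simp add: s_def) (intro MV_basis_intro subs[OF is'] greedy_props(1,2)[OF subs[OF is'] f(1,2)])
    qed
    then have "sum_list (map indic_vec F) \<in> polymatroid_base_polytope r"
      using assms(3) unfolding flag_base_polytope_def by (auto intro: hull_inc)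
    then have le1: "sum_list (map indic_vec F) \<bullet> indic_vec U \<le> real (r U)"
      unfolding polymatroid_base_polytope_def by blast
    have "sum_list (map indic_vec F) \<bullet> indic_vec U = (\<Sum>i<s. real (card (F!i \<inter> U)))"
      unfolding flag_inner2 lenF ..
    also have "\<dots> = real (rho U)" unfolding rho_def of_nat_sum
      by (rule sum.cong) (simp_all add: F_def s_def rk[unfolded s_def])
    finally have lower: "rho U \<le> r U" using le1 by simp
    obtain x where x: "x \<in> polymatroid_base_polytope r" "x \<bullet> indic_vec U = real (r U)"
      using poly_greedy[OF assms(2) f(1,2) cU] f(3) by metis
    have "flag_base_polytope FF \<subseteq> {y. inner (indic_vec U) y \<le> real (rho U)}"
      unfolding flag_base_polytope_def
    proof (rule hull_minimal)
      show "convex {y. indic_vec U \<bullet> y \<le> real (rho U)}" by (rule convex_halfspace_le)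
    next
      show "{sum_list (map indic_vec F) |F. F \<in> FF} \<subseteq> {y. indic_vec U \<bullet> y \<le> real (rho U)}"
      proof
        fix y assume "y \<in> {sum_list (map indic_vec F) |F. F \<in> FF}"
        then obtain G where G: "G \<in> FF" "y = sum_list (map indic_vec G)" by blast
        have lG: "length G = s" using G(1) len s_def unfolding FF by simp
        have bG: "MV_basis (Vs!i) (G!i)" if "i < s" for i using G(1) that lG unfolding FF by auto
        have "y \<bullet> indic_vec U = (\<Sum>i<s. real (card (G!i \<inter> U)))"
          unfolding G(2) flag_inner2 lG ..
        also have "\<dots> \<le> (\<Sum>i<s. real (vec.dim (Vs!i) - vec.dim (Vs!i \<inter> Zs U)))"
        proof (rule sum_mono)
          fix i assume "i \<in> {..<s}"
          then have i: "i < s" by simp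
          show "real (card (G!i \<inter> U)) \<le> real (vec.dim (Vs!i) - vec.dim (Vs!i \<inter> Zs U))"
            using basis_card_le[OF subs[OF i] MV_basis_imp[OF bG[OF i]]] by simp
        qed
        also have "\<dots> = real (rho U)" unfolding rho_def by simp
        finally show "y \<in> {y. indic_vec U \<bullet> y \<le> real (rho U)}" by (simp add: inner_commute)
      qed
    qed
    then have "x \<bullet> indic_vec U \<le> real (rho U)" using x(1) assms(3) by (auto simp: inner_commute)
    then have upper: "r U \<le> rho U" using x(2) by simp
    show ?thesis using lower upper by simp
  qed
  have ex: "\<exists>rw::'n \<Rightarrow> complex^'n. i < s \<longrightarrow> vec.span (range rw) = Vs!i" for i
  proof (cases "i < s")
    case True
    from rows_exist[OF subs[OF True]] obtain rw :: "'n \<Rightarrow> complex^'n"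
      where rw: "vec.span (range rw) = Vs!i" ..
    show ?thesis by (rule exI[of _ rw]) (simp add: rw)
  qed simp
  have "\<forall>i. \<exists>rw::'n \<Rightarrow> complex^'n. i < s \<longrightarrow> vec.span (range rw) = Vs!i" using ex by (intro allI)
  then have "\<exists>RW::nat \<Rightarrow> 'n \<Rightarrow> complex^'n. \<forall>i. i < s \<longrightarrow> vec.span (range (RW i)) = Vs!i" by (rule choice)
  then obtain RW :: "nat \<Rightarrow> 'n \<Rightarrow> complex^'n" where RW0: "\<forall>i. i < s \<longrightarrow> vec.span (range (RW i)) = Vs!i" ..
  have RW: "vec.span (range (RW i)) = Vs!i" if "i < s" for i by (rule RW0[rule_format, OF that])
  define \<phi> where "\<phi> a = fvec.span ((\<lambda>i. emb i (colv (RW i) a)) ` {..<s})" for a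
  show ?thesis unfolding representable_polymatroid_def
  proof (intro exI[of _ \<phi>] conjI allI)
    fix a
    show "fvec.subspace (\<phi> a)" unfolding \<phi>_def by (rule fvec.subspace_span)
    show "\<exists>S. finite S \<and> \<phi> a = fvec.span S" unfolding \<phi>_def
      by (rule exI[of _ "(\<lambda>i. emb i (colv (RW i) a)) ` {..<s}"]) simp
  next
    fix A
    have e1: "fvec.span (\<Union>a\<in>A. \<phi> a) = fvec.span (\<Union>a\<in>A. (\<lambda>i. emb i (colv (RW i) a)) ` {..<s})"
      unfolding \<phi>_def by (rule span_Union_span)
    have e2: "(\<Union>a\<in>A. (\<lambda>i. emb i (colv (RW i) a)) ` {..<s}) = (\<Union>i<s. emb i ` (colv (RW i) ` A))"
      by auto
    have "fvec.dim (fvec.span (\<Union>a\<in>A. \<phi> a)) = fvec.dim (\<Union>i<s. emb i ` (colv (RW i) ` A))"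
      unfolding e1 e2 by (rule fvec.dim_span)
    also have "\<dots> = (\<Sum>i<s. fvec.dim (emb i ` (colv (RW i) ` A)))"
      by (rule dim_blocks) (auto simp: emb_Blk)
    also have "\<dots> = (\<Sum>i<s. vec.dim (colv (RW i) ` A))" by (simp add: dim_emb)
    also have "\<dots> = rho A" unfolding rho_def
    proof (rule sum.cong)
      fix i assume "i \<in> {..<s}"
      then have i: "i < s" by simp
      show "vec.dim (colv (RW i) ` A) = vec.dim (Vs!i) - vec.dim (Vs!i \<inter> Zs A)"
        using col_dim[OF subs[OF i] RW[OF i], of A] by simp
    qed simp
    finally show "r A = fvec.dim (fvec.span (\<Union>a\<in>A. \<phi> a))" using key[of A] by simp
  qed
qed

end
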